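(* Under the hypotheses below, let $\epsilon>0$ and $$\hat\Gamma_{N_2}^{\epsilon}(\mathcal{K})=\{z\in\mathrm{Grid}(N_2):\sigma_{\inf}((\mathcal{K}-zI)\mathcal{P}_{N_2}^* )+1/N_2\le\epsilon\}.$$ Then $\hat\Gamma_{N_2}^{\epsilon}(\mathcal{K})\subset\mathrm{Sp}_{\mathrm{ap},\epsilon}(\mathcal{K})$ for every $N_2$, and $\hat\Gamma_{N_2}^{\epsilon}(\mathcal{K})\to\mathrm{Sp}_{\mathrm{ap},\epsilon}(\mathcal{K})$ in the Attouch–Wets sense as $N_2\to\infty$.
   Context: $\mathcal{H}$ is an RKHS on $\mathcal{X}$ with kernel $\mathfrak{K}$ and kernel functions $\mathfrak{K}_x$. For $F:\mathcal{X}\to\mathcal{X}$, the Koopman operator $\mathcal{K}g=g\circ F$ (domain $\{g\in\mathcal{H}:g\circ F\in\mathcal{H}\}$, a closed operator) is assumed densely defined; $\mathcal{K}^*$ is its adjoint. $\mathfrak{K}_1,\mathfrak{K}_2,\dots$ is a countable family of kernel functions whose span is a core of both $\mathcal{K}$ and $\mathcal{K}^*$; $V_n=\mathrm{span}\{\mathfrak{K}_1,\dots,\mathfrak{K}_n\}$, $\mathcal{P}_n$ the orthogonal projection onto $V_n$, $\mathcal{P}_n^*$ the inclusion $V_n\hookrightarrow\mathcal{H}$. Injection modulus $\sigma_{\inf}(T)=\inf\{\|Tg\|/\|g\|:0\ne g\in\mathcal{D}(T)\}$; $\mathrm{Sp}_{\mathrm{ap},\epsilon}(T)=\overline{\{z\in\mathbb{C}:\sigma_{\inf}(T-zI)<\epsilon\}}$.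 $\mathrm{Grid}(N)=\frac1N(\mathbb{Z}+i\mathbb{Z})\cap\{z:|z|\le N\}$. Attouch–Wets convergence of closed sets $C_n\to C$: if $C=\emptyset$, for every $m$, $C_n\cap B_m(0)=\emptyset$ for all large $n$; otherwise, for every $\delta>0$ and compact $K\subset\mathbb{C}$, for all large $n$, $C_n\cap K\subset C+B_\delta(0)$ and $C\cap K\subset C_n+B_\delta(0)$. *)

theory Defs
  imports "HOL-Analysis.Analysis"
begin

text \<open>A Hilbert space of functions X -> C is given by a carrier set H of functions
  and an inner product ip (linear in the first, conjugate-linear in the second argument).\<close>

definition hnorm :: "(('x \<Rightarrow> complex) \<Rightarrow> ('x \<Rightarrow> complex) \<Rightarrow> complex) \<Rightarrow> ('x \<Rightarrow> complex) \<Rightarrow> real" where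
  "hnorm ip g = sqrt (Re (ip g g))"

definition fdiff :: "('x \<Rightarrow> complex) \<Rightarrow> ('x \<Rightarrow> complex) \<Rightarrow> ('x \<Rightarrow> complex)" where
  "fdiff f g = (\<lambda>y. f y - g y)"

definition function_hilbert_space ::
  "('x \<Rightarrow> complex) set \<Rightarrow> (('x \<Rightarrow> complex) \<Rightarrow> ('x \<Rightarrow> complex) \<Rightarrow> complex) \<Rightarrow> bool" where
  "function_hilbert_space H ip \<longleftrightarrow>
     (\<lambda>y. 0) \<in> H \<and>
     (\<forall>f\<in>H. \<forall>g\<in>H. (\<lambda>y. f y + g y) \<in> H) \<and>
     (\<forall>c. \<forall>f\<in>H. (\<lambda>y. c * f y) \<in> H) \<and>
     (\<forall>f\<in>H. \<forall>g\<in>H. \<forall>h\<in>H. ip (\<lambda>y. f y + g y) h = ip f h + ip g h) \<and>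
     (\<forall>c. \<forall>f\<in>H. \<forall>h\<in>H. ip (\<lambda>y. c * f y) h = c * ip f h) \<and>
     (\<forall>f\<in>H. \<forall>g\<in>H. ip g f = cnj (ip f g)) \<and>
     (\<forall>f\<in>H. Im (ip f f) = 0 \<and> Re (ip f f) \<ge> 0) \<and>
     (\<forall>f\<in>H. ip f f = 0 \<longrightarrow> f = (\<lambda>y. 0)) \<and>
     (\<forall>s. (\<forall>n. s n \<in> H) \<and>
          (\<forall>e>0. \<exists>M. \<forall>m\<ge>M. \<forall>n\<ge>M. hnorm ip (fdiff (s m) (s n)) < e)
          \<longrightarrow> (\<exists>g\<in>H. (\<lambda>n. hnorm ip (fdiff (s n) g)) \<longlonglongrightarrow> 0))"

text \<open>RKHS with kernel functions kern x (so the kernel is K(y,x) = kern x y):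
  reproducing property g x = <g, kern x>.\<close>
definition is_RKHS ::
  "('x \<Rightarrow> complex) set \<Rightarrow> (('x \<Rightarrow> complex) \<Rightarrow> ('x \<Rightarrow> complex) \<Rightarrow> complex) \<Rightarrow> ('x \<Rightarrow> 'x \<Rightarrow> complex) \<Rightarrow> bool" where
  "is_RKHS H ip kern \<longleftrightarrow> function_hilbert_space H ip \<and>
     (\<forall>x. kern x \<in> H) \<and> (\<forall>g\<in>H. \<forall>x. g x = ip g (kern x))"

text \<open>Koopman operator K g = g o F with its maximal domain.\<close>
definition koop_dom :: "('x \<Rightarrow> complex) set \<Rightarrow> ('x \<Rightarrow> 'x) \<Rightarrow> ('x \<Rightarrow> complex) set" where
  "koop_dom H F = {g\<in>H. g \<circ> F \<in> H}"

definition koop_adj_dom ::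
  "('x \<Rightarrow> complex) set \<Rightarrow> (('x \<Rightarrow> complex) \<Rightarrow> ('x \<Rightarrow> complex) \<Rightarrow> complex) \<Rightarrow> ('x \<Rightarrow> 'x) \<Rightarrow> ('x \<Rightarrow> complex) set" where
  "koop_adj_dom H ip F = {h\<in>H. \<exists>w\<in>H. \<forall>g\<in>koop_dom H F. ip (g \<circ> F) h = ip g w}"

definition koop_adj ::
  "('x \<Rightarrow> complex) set \<Rightarrow> (('x \<Rightarrow> complex) \<Rightarrow> ('x \<Rightarrow> complex) \<Rightarrow> complex) \<Rightarrow> ('x \<Rightarrow> 'x) \<Rightarrow> ('x \<Rightarrow> complex) \<Rightarrow> ('x \<Rightarrow> complex)" where
  "koop_adj H ip F h = (SOME w. w \<in> H \<and> (\<forall>g\<in>koop_dom H F. ip (g \<circ> F) h = ip g w))"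

definition densely_defined ::
  "('x \<Rightarrow> complex) set \<Rightarrow> (('x \<Rightarrow> complex) \<Rightarrow> ('x \<Rightarrow> complex) \<Rightarrow> complex) \<Rightarrow> ('x \<Rightarrow> complex) set \<Rightarrow> bool" where
  "densely_defined H ip D \<longleftrightarrow> D \<subseteq> H \<and> (\<forall>g\<in>H. \<forall>e>0. \<exists>d\<in>D. hnorm ip (fdiff g d) < e)"

definition is_core ::
  "(('x \<Rightarrow> complex) \<Rightarrow> ('x \<Rightarrow> complex) \<Rightarrow> complex) \<Rightarrow> ('x \<Rightarrow> complex) set \<Rightarrow>
   (('x \<Rightarrow> complex) \<Rightarrow> ('x \<Rightarrow> complex)) \<Rightarrow> ('x \<Rightarrow> complex) set \<Rightarrow> bool" where
  "is_core ip D T S \<longleftrightarrow> S \<subseteq> D \<and>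
     (\<forall>g\<in>D. \<exists>s. (\<forall>n. s n \<in> S) \<and> (\<lambda>n. hnorm ip (fdiff (s n) g)) \<longlonglongrightarrow> 0 \<and>
                  (\<lambda>n. hnorm ip (fdiff (T (s n)) (T g))) \<longlonglongrightarrow> 0)"

definition Vspan :: "('x \<Rightarrow> 'x \<Rightarrow> complex) \<Rightarrow> (nat \<Rightarrow> 'x) \<Rightarrow> nat \<Rightarrow> ('x \<Rightarrow> complex) set" where
  "Vspan kern xs n = {(\<lambda>y. \<Sum>j\<in>{1..n}. c j * kern (xs j) y) | c. True}"

definition Vspan_all :: "('x \<Rightarrow> 'x \<Rightarrow> complex) \<Rightarrow> (nat \<Rightarrow> 'x) \<Rightarrow> ('x \<Rightarrow> complex) set" where
  "Vspan_all kern xs = (\<Union>n. Vspan kern xs n)"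

text \<open>Injection modulus of T restricted to a domain D (inf of empty set = +infinity).\<close>
definition sigma_inf ::
  "(('x \<Rightarrow> complex) \<Rightarrow> ('x \<Rightarrow> complex) \<Rightarrow> complex) \<Rightarrow> ('x \<Rightarrow> complex) set \<Rightarrow>
   (('x \<Rightarrow> complex) \<Rightarrow> ('x \<Rightarrow> complex)) \<Rightarrow> ereal" where
  "sigma_inf ip D T = Inf {ereal (hnorm ip (T g) / hnorm ip g) | g. g \<in> D \<and> g \<noteq> (\<lambda>y. 0)}"

definition koop_shift :: "('x \<Rightarrow> 'x) \<Rightarrow> complex \<Rightarrow> ('x \<Rightarrow> complex) \<Rightarrow> ('x \<Rightarrow> complex)" where
  "koop_shift F z g = (\<lambda>y. g (F y) - z * g y)"

definition Sp_ap_eps ::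
  "('x \<Rightarrow> complex) set \<Rightarrow> (('x \<Rightarrow> complex) \<Rightarrow> ('x \<Rightarrow> complex) \<Rightarrow> complex) \<Rightarrow> ('x \<Rightarrow> 'x) \<Rightarrow> real \<Rightarrow> complex set" where
  "Sp_ap_eps H ip F \<epsilon> = closure {z. sigma_inf ip (koop_dom H F) (koop_shift F z) < ereal \<epsilon>}"

definition Grid :: "nat \<Rightarrow> complex set" where
  "Grid N = {z. \<exists>a b :: int. z = Complex (of_int a / of_nat N) (of_int b / of_nat N) \<and> cmod z \<le> of_nat N}"

definition Gamma_hat ::
  "(('x \<Rightarrow> complex) \<Rightarrow> ('x \<Rightarrow> complex) \<Rightarrow> complex) \<Rightarrow> ('x \<Rightarrow> 'x \<Rightarrow> complex) \<Rightarrow> (nat \<Rightarrow> 'x) \<Rightarrow>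
   ('x \<Rightarrow> 'x) \<Rightarrow> real \<Rightarrow> nat \<Rightarrow> complex set" where
  "Gamma_hat ip kern xs F \<epsilon> N =
     {z \<in> Grid N. sigma_inf ip (Vspan kern xs N) (koop_shift F z) + ereal (1 / of_nat N) \<le> ereal \<epsilon>}"

definition attouch_wets :: "(nat \<Rightarrow> complex set) \<Rightarrow> complex set \<Rightarrow> bool" where
  "attouch_wets Cs C \<longleftrightarrow>
     (if C = {} then (\<forall>m::nat. eventually (\<lambda>n. Cs n \<inter> ball 0 (real m) = {}) sequentially)
      else (\<forall>\<delta>>0. \<forall>K. compact K \<longrightarrow>
              eventually (\<lambda>n. Cs n \<inter> K \<subseteq> (\<Union>c\<in>C. ball c \<delta>) \<and>
                              C \<inter> K \<subseteq> (\<Union>c\<in>Cs n. ball c \<delta>)) sequentially))"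

end

theory Submission
  imports Defs
begin


lemma disc_lemma:
  fixes a b c :: real
  assumes "\<And>t. 0 \<le> a + 2*t*b + t^2*c" and "c \<ge> 0"
  shows "b^2 \<le> a*c"
proof (cases "c > 0")
  case True
  have "0 \<le> a + 2*(-b/c)*b + (-b/c)^2*c" by (rule assms(1))
  also have "\<dots> = a - b^2/c" using True by (simp add: field_simps power2_eq_square)
  finally have "b^2/c \<le> a" by simp
  then show ?thesis using True by (simp add: field_simps)
next
  case False
  then have c0: "c = 0" using assms(2) by simp
  have a0: "0 \<le> a" using assms(1)[of 0] by simp
  show ?thesis
  proof (cases "b = 0")
    case True then show ?thesis using a0 c0 by simp
  next
    case False
    have "0 \<le> a + 2*(-(a+1)/(2*b))*b + (-(a+1)/(2*b))^2*c" by (rule assms(1))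
    also have "\<dots> = -1" using False c0 by (simp add: field_simps)
    finally show ?thesis by simp
  qed
qed

context
  fixes H :: "('x \<Rightarrow> complex) set" and ip
  assumes hs: "function_hilbert_space H ip"
begin

lemma h_zero: "(\<lambda>y. 0) \<in> H" using hs unfolding function_hilbert_space_def by blast
lemma h_add: "f \<in> H \<Longrightarrow> g \<in> H \<Longrightarrow> (\<lambda>y. f y + g y) \<in> H"
  using hs unfolding function_hilbert_space_def by blast
lemma h_scale: "f \<in> H \<Longrightarrow> (\<lambda>y. c * f y) \<in> H"
  using hs unfolding function_hilbert_space_def by blast
lemma ip_add1: "f \<in> H \<Longrightarrow> g \<in> H \<Longrightarrow> h \<in> H \<Longrightarrow> ip (\<lambda>y. f y + g y) h = ip f h + ip g h"
  using hs unfolding function_hilbert_space_def by blast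
lemma ip_scale1: "f \<in> H \<Longrightarrow> h \<in> H \<Longrightarrow> ip (\<lambda>y. c * f y) h = c * ip f h"
  using hs unfolding function_hilbert_space_def by blast
lemma ip_cnj: "f \<in> H \<Longrightarrow> g \<in> H \<Longrightarrow> ip g f = cnj (ip f g)"
  using hs unfolding function_hilbert_space_def by blast
lemma ip_pos: "f \<in> H \<Longrightarrow> Im (ip f f) = 0 \<and> Re (ip f f) \<ge> 0"
  using hs unfolding function_hilbert_space_def by blast
lemma ip_def0: "f \<in> H \<Longrightarrow> ip f f = 0 \<Longrightarrow> f = (\<lambda>y. 0)"
  using hs unfolding function_hilbert_space_def by blast

lemma ip_add2: "f \<in> H \<Longrightarrow> g \<in> H \<Longrightarrow> h \<in> H \<Longrightarrow> ip h (\<lambda>y. f y + g y) = ip h f + ip h g"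
proof -
  assume a: "f \<in> H" "g \<in> H" "h \<in> H"
  have "ip h (\<lambda>y. f y + g y) = cnj (ip (\<lambda>y. f y + g y) h)" using a h_add ip_cnj by blast
  also have "\<dots> = cnj (ip f h) + cnj (ip g h)" using a ip_add1 by simp
  also have "\<dots> = ip h f + ip h g" using ip_cnj[OF a(3) a(1)] ip_cnj[OF a(3) a(2)] by simp
  finally show ?thesis .
qed

lemma ip_scale2: "f \<in> H \<Longrightarrow> h \<in> H \<Longrightarrow> ip h (\<lambda>y. c * f y) = cnj c * ip h f"
proof -
  assume a: "f \<in> H" "h \<in> H"
  have "ip h (\<lambda>y. c * f y) = cnj (ip (\<lambda>y. c * f y) h)" using a h_scale ip_cnj by blast
  also have "\<dots> = cnj c * cnj (ip f h)" using a ip_scale1 by simp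
  also have "\<dots> = cnj c * ip h f" using ip_cnj[OF a(2) a(1)] by simp
  finally show ?thesis .
qed

lemma hnorm_nonneg: assumes "f \<in> H" shows "hnorm ip f \<ge> 0" unfolding hnorm_def using ip_pos[OF assms] by simp

lemma hnorm_sq: assumes "f \<in> H" shows "(hnorm ip f)^2 = Re (ip f f)"
  unfolding hnorm_def using ip_pos[OF assms] by simp

lemma cauchy_schwarz: assumes f: "f \<in> H" and g: "g \<in> H"
  shows "Re (ip f g) \<le> hnorm ip f * hnorm ip g"
proof -
  have "\<And>t. 0 \<le> Re (ip f f) + 2*t*Re (ip f g) + t^2*Re (ip g g)"
  proof -
    fix t :: real
    let ?u = "\<lambda>y. f y + complex_of_real t * g y"
    have gt: "(\<lambda>y. complex_of_real t * g y) \<in> H" using g h_scale by blast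
    have u: "?u \<in> H" using f gt h_add by blast
    have "ip ?u ?u = ip f ?u + ip (\<lambda>y. complex_of_real t * g y) ?u" using ip_add1 f gt u by blast
    also have "\<dots> = (ip f f + ip f (\<lambda>y. complex_of_real t * g y))
        + (ip (\<lambda>y. complex_of_real t * g y) f + ip (\<lambda>y. complex_of_real t * g y) (\<lambda>y. complex_of_real t * g y))"
      using ip_add2 f gt by simp
    also have "\<dots> = ip f f + t * ip f g + t * ip g f + t * t * ip g g"
      using ip_scale1 ip_scale2 f g gt by simp
    finally have e: "ip ?u ?u = ip f f + t * ip f g + t * ip g f + t * t * ip g g" .
    have "Re (ip g f) = Re (ip f g)" using ip_cnj[OF f g] by simp
    then have "Re (ip ?u ?u) = Re (ip f f) + 2*t*Re (ip f g) + t^2*Re (ip g g)"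
    proof -
      have "Re (ip ?u ?u) = Re (ip f f) + t * Re (ip f g) + t * Re (ip g f) + (t*t) * Re (ip g g)"
        unfolding e by simp
      then show ?thesis using \<open>Re (ip g f) = Re (ip f g)\<close> by (simp add: power2_eq_square)
    qed
    then show "0 \<le> Re (ip f f) + 2*t*Re (ip f g) + t^2*Re (ip g g)" using ip_pos[OF u] by simp
  qed
  then have "(Re (ip f g))^2 \<le> Re (ip f f) * Re (ip g g)"
    by (rule disc_lemma) (use ip_pos[OF g] in simp)
  then have "(Re (ip f g))^2 \<le> (hnorm ip f * hnorm ip g)^2"
    using hnorm_sq f g by (simp add: power_mult_distrib)
  then have "\<bar>Re (ip f g)\<bar> \<le> \<bar>hnorm ip f * hnorm ip g\<bar>" using abs_le_square_iff by blast
  moreover have "0 \<le> hnorm ip f * hnorm ip g" using hnorm_nonneg f g by simp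
  ultimately show ?thesis by simp
qed

lemma hnorm_add: assumes f: "f \<in> H" and g: "g \<in> H"
  shows "hnorm ip (\<lambda>y. f y + g y) \<le> hnorm ip f + hnorm ip g"
proof -
  have "ip (\<lambda>y. f y + g y) (\<lambda>y. f y + g y) = (ip f f + ip f g) + (ip g f + ip g g)"
    using ip_add1 ip_add2 f g h_add by simp
  moreover have "Re (ip g f) = Re (ip f g)" using ip_cnj[OF f g] by simp
  ultimately have "Re (ip (\<lambda>y. f y + g y) (\<lambda>y. f y + g y)) = Re (ip f f) + 2 * Re (ip f g) + Re (ip g g)"
    by simp
  also have "\<dots> \<le> (hnorm ip f)^2 + 2 * (hnorm ip f * hnorm ip g) + (hnorm ip g)^2"
    using cauchy_schwarz[OF f g] hnorm_sq f g by simp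
  also have "\<dots> = (hnorm ip f + hnorm ip g)^2" by (simp add: power2_eq_square algebra_simps)
  finally have "hnorm ip (\<lambda>y. f y + g y) \<le> sqrt ((hnorm ip f + hnorm ip g)^2)"
    unfolding hnorm_def[of ip "\<lambda>y. f y + g y"] by (rule real_sqrt_le_mono)
  then show ?thesis using hnorm_nonneg f g by simp
qed

lemma hnorm_scale: assumes f: "f \<in> H"
  shows "hnorm ip (\<lambda>y. c * f y) = cmod c * hnorm ip f"
proof -
  have "ip (\<lambda>y. c * f y) (\<lambda>y. c * f y) = c * cnj c * ip f f"
    using ip_scale1 ip_scale2 f h_scale by simp
  also have "\<dots> = complex_of_real ((cmod c)^2) * ip f f"
  proof -
    have "c * cnj c = complex_of_real ((cmod c)^2)" by (rule complex_norm_square[symmetric])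
    then show ?thesis by (simp only:)
  qed
  finally have "Re (ip (\<lambda>y. c * f y) (\<lambda>y. c * f y)) = (cmod c)^2 * Re (ip f f)" by simp
  then have "hnorm ip (\<lambda>y. c * f y) = sqrt ((cmod c)^2 * Re (ip f f))" unfolding hnorm_def by simp
  also have "\<dots> = cmod c * hnorm ip f" unfolding hnorm_def by (simp add: real_sqrt_mult)
  finally show ?thesis .
qed

lemma hnorm_pos: "f \<in> H \<Longrightarrow> f \<noteq> (\<lambda>y. 0) \<Longrightarrow> hnorm ip f > 0"
proof -
  assume f: "f \<in> H" "f \<noteq> (\<lambda>y. 0)"
  have "ip f f \<noteq> 0" using ip_def0 f by blast
  then have "Re (ip f f) \<noteq> 0" using ip_pos f complex_eq_iff by (metis zero_complex.simps)
  then have "Re (ip f f) > 0" using ip_pos f by fastforce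
  then show ?thesis unfolding hnorm_def by simp
qed

lemma fdiff_in: "f \<in> H \<Longrightarrow> g \<in> H \<Longrightarrow> fdiff f g \<in> H"
proof -
  assume a: "f \<in> H" "g \<in> H"
  have "fdiff f g = (\<lambda>y. f y + (\<lambda>y. (-1) * g y) y)" unfolding fdiff_def by simp
  then show ?thesis using a h_add h_scale by metis
qed

lemma hnorm_fdiff_sym: "f \<in> H \<Longrightarrow> g \<in> H \<Longrightarrow> hnorm ip (fdiff f g) = hnorm ip (fdiff g f)"
proof -
  assume a: "f \<in> H" "g \<in> H"
  have e: "fdiff f g = (\<lambda>y. (-1) * fdiff g f y)" unfolding fdiff_def by simp
  have "hnorm ip (\<lambda>y. (-1) * fdiff g f y) = cmod (-1) * hnorm ip (fdiff g f)"
    by (rule hnorm_scale[OF fdiff_in[OF a(2) a(1)]])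
  then show ?thesis unfolding e by simp
qed

lemma hnorm_rev: "f \<in> H \<Longrightarrow> g \<in> H \<Longrightarrow> \<bar>hnorm ip f - hnorm ip g\<bar> \<le> hnorm ip (fdiff f g)"
proof -
  assume a: "f \<in> H" "g \<in> H"
  have "f = (\<lambda>y. g y + fdiff f g y)" unfolding fdiff_def by simp
  then have 1: "hnorm ip f \<le> hnorm ip g + hnorm ip (fdiff f g)" using hnorm_add a fdiff_in by metis
  have "g = (\<lambda>y. f y + fdiff g f y)" unfolding fdiff_def by simp
  then have 2: "hnorm ip g \<le> hnorm ip f + hnorm ip (fdiff f g)"
    using hnorm_add a fdiff_in hnorm_fdiff_sym by metis
  show ?thesis using 1 2 by linarith
qed

end


lemma Vspan_mono: assumes "M \<le> N" shows "Vspan kern xs M \<subseteq> Vspan kern xs N"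
proof
  fix s assume "s \<in> Vspan kern xs M"
  then obtain c where s: "s = (\<lambda>y. \<Sum>j\<in>{1..M}. c j * kern (xs j) y)" unfolding Vspan_def by blast
  define c' where "c' j = (if j \<le> M then c j else 0)" for j
  have "\<And>y. (\<Sum>j\<in>{1..N}. c' j * kern (xs j) y) = (\<Sum>j\<in>{1..M}. c j * kern (xs j) y)"
    by (rule sum.mono_neutral_cong_right) (use assms in \<open>auto simp: c'_def\<close>)
  then have "s = (\<lambda>y. \<Sum>j\<in>{1..N}. c' j * kern (xs j) y)" unfolding s by simp
  then show "s \<in> Vspan kern xs N" unfolding Vspan_def by blast
qed

lemma Vspan_sub_all: "Vspan kern xs N \<subseteq> Vspan_all kern xs"
  unfolding Vspan_all_def by blast

lemma sigma_le: "g \<in> D \<Longrightarrow> g \<noteq> (\<lambda>y. 0) \<Longrightarrow> sigma_inf ip D T \<le> ereal (hnorm ip (T g) / hnorm ip g)"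
  unfolding sigma_inf_def by (rule Inf_lower) blast

lemma sigma_mono: "D \<subseteq> D' \<Longrightarrow> sigma_inf ip D' T \<le> sigma_inf ip D T"
  unfolding sigma_inf_def by (rule Inf_superset_mono) blast

lemma shift_in: assumes hs: "function_hilbert_space H ip" and s: "s \<in> koop_dom H F"
  shows "koop_shift F w s \<in> H"
proof -
  have "koop_shift F w s = (\<lambda>y. (s \<circ> F) y + (-w) * s y)" unfolding koop_shift_def by auto
  moreover have "s \<in> H" "s \<circ> F \<in> H" using s unfolding koop_dom_def by auto
  ultimately show ?thesis using h_add[OF hs] h_scale[OF hs] by metis
qed

lemma shift_est: assumes hs: "function_hilbert_space H ip" and s: "s \<in> koop_dom H F"
  shows "hnorm ip (koop_shift F z s) \<le> hnorm ip (koop_shift F w s) + cmod (z - w) * hnorm ip s"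
proof -
  have sH: "s \<in> H" using s unfolding koop_dom_def by auto
  have e: "koop_shift F z s = (\<lambda>y. koop_shift F w s y + (w - z) * s y)"
    unfolding koop_shift_def by (auto simp: algebra_simps)
  have "hnorm ip (koop_shift F z s) \<le> hnorm ip (koop_shift F w s) + hnorm ip (\<lambda>y. (w - z) * s y)"
    unfolding e by (rule hnorm_add[OF hs shift_in[OF hs s] h_scale[OF hs sH]])
  also have "hnorm ip (\<lambda>y. (w - z) * s y) = cmod (z - w) * hnorm ip s"
    using hnorm_scale[OF hs sH] by (simp add: norm_minus_commute)
  finally show ?thesis .
qed

lemma null_lim: assumes "\<And>n. \<bar>a n - l\<bar> \<le> b n" and "b \<longlonglongrightarrow> 0"
  shows "a \<longlonglongrightarrow> (l::real)"
proof -
  have "(\<lambda>n. a n - l) \<longlonglongrightarrow> 0"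
    by (rule Lim_null_comparison[OF _ assms(2)]) (use assms(1) in simp)
  then show ?thesis by (rule LIM_zero_cancel)
qed

lemma shift_conv: assumes hs: "function_hilbert_space H ip" and s: "\<And>n. s n \<in> koop_dom H F"
  and h: "h \<in> koop_dom H F"
  and c1: "(\<lambda>n. hnorm ip (fdiff (s n) h)) \<longlonglongrightarrow> 0"
  and c2: "(\<lambda>n. hnorm ip (fdiff (s n \<circ> F) (h \<circ> F))) \<longlonglongrightarrow> 0"
  shows "(\<lambda>n. hnorm ip (koop_shift F w (s n))) \<longlonglongrightarrow> hnorm ip (koop_shift F w h)"
proof (rule null_lim)
  fix n
  have sn: "s n \<in> H" "s n \<circ> F \<in> H" and hh: "h \<in> H" "h \<circ> F \<in> H"
    using s[of n] h unfolding koop_dom_def by auto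
  have e: "fdiff (koop_shift F w (s n)) (koop_shift F w h) =
      (\<lambda>y. fdiff (s n \<circ> F) (h \<circ> F) y + (-w) * fdiff (s n) h y)"
    unfolding fdiff_def koop_shift_def by (auto simp: algebra_simps)
  have "\<bar>hnorm ip (koop_shift F w (s n)) - hnorm ip (koop_shift F w h)\<bar>
      \<le> hnorm ip (fdiff (koop_shift F w (s n)) (koop_shift F w h))"
    by (rule hnorm_rev[OF hs shift_in[OF hs s] shift_in[OF hs h]])
  also have "\<dots> \<le> hnorm ip (fdiff (s n \<circ> F) (h \<circ> F)) + hnorm ip (\<lambda>y. (-w) * fdiff (s n) h y)"
    unfolding e by (rule hnorm_add[OF hs fdiff_in[OF hs sn(2) hh(2)] h_scale[OF hs fdiff_in[OF hs sn(1) hh(1)]]])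
  also have "hnorm ip (\<lambda>y. (-w) * fdiff (s n) h y) = cmod w * hnorm ip (fdiff (s n) h)"
    using hnorm_scale[OF hs fdiff_in[OF hs sn(1) hh(1)], of "-w"] by (simp only: norm_minus_cancel)
  finally show "\<bar>hnorm ip (koop_shift F w (s n)) - hnorm ip (koop_shift F w h)\<bar>
      \<le> hnorm ip (fdiff (s n \<circ> F) (h \<circ> F)) + cmod w * hnorm ip (fdiff (s n) h)" .
next
  show "(\<lambda>n. hnorm ip (fdiff (s n \<circ> F) (h \<circ> F)) + cmod w * hnorm ip (fdiff (s n) h)) \<longlonglongrightarrow> 0"
    using tendsto_add[OF c2 tendsto_mult[OF tendsto_const c1]] by simp
qed

lemma norm_conv: assumes hs: "function_hilbert_space H ip" and s: "\<And>n. s n \<in> H"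
  and h: "h \<in> H"
  and c1: "(\<lambda>n. hnorm ip (fdiff (s n) h)) \<longlonglongrightarrow> 0"
  shows "(\<lambda>n. hnorm ip (s n)) \<longlonglongrightarrow> hnorm ip h"
  by (rule null_lim[OF hnorm_rev[OF hs s h] c1])

lemma hnorm_zero: assumes hs: "function_hilbert_space H ip" shows "hnorm ip (\<lambda>y. 0) = 0"
proof -
  have "hnorm ip (\<lambda>y. 0 * (0::complex)) = cmod 0 * hnorm ip (\<lambda>y. 0)"
    by (rule hnorm_scale[OF hs h_zero[OF hs]])
  then show ?thesis by simp
qed



lemma grid_approx: assumes N: "N \<ge> 1" and wN: "cmod w + 2 \<le> real N"
  shows "\<exists>g\<in>Grid N. cmod (g - w) \<le> 2 / real N"
proof -
  let ?a = "\<lfloor>real N * Re w\<rfloor>" and ?b = "\<lfloor>real N * Im w\<rfloor>"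
  define g where "g = Complex (of_int ?a / of_nat N) (of_int ?b / of_nat N)"
  have Np: "real N > 0" using N by simp
  have ra: "\<bar>of_int ?a / real N - Re w\<bar> \<le> 1 / real N"
  proof -
    have "of_int ?a \<le> real N * Re w" "real N * Re w < of_int ?a + 1" by linarith+
    then have "\<bar>of_int ?a - real N * Re w\<bar> \<le> 1" by linarith
    then have "\<bar>of_int ?a - real N * Re w\<bar> / real N \<le> 1 / real N" using Np by (simp add: divide_right_mono)
    moreover have "\<bar>of_int ?a - real N * Re w\<bar> / real N = \<bar>of_int ?a / real N - Re w\<bar>"
      using Np by (simp add: field_simps abs_div_pos[symmetric] del: abs_divide)
    ultimately show ?thesis by simp
  qed
  have rb: "\<bar>of_int ?b / real N - Im w\<bar> \<le> 1 / real N"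
  proof -
    have "of_int ?b \<le> real N * Im w" "real N * Im w < of_int ?b + 1" by linarith+
    then have "\<bar>of_int ?b - real N * Im w\<bar> \<le> 1" by linarith
    then have "\<bar>of_int ?b - real N * Im w\<bar> / real N \<le> 1 / real N" using Np by (simp add: divide_right_mono)
    moreover have "\<bar>of_int ?b - real N * Im w\<bar> / real N = \<bar>of_int ?b / real N - Im w\<bar>"
      using Np by (simp add: field_simps abs_div_pos[symmetric] del: abs_divide)
    ultimately show ?thesis by simp
  qed
  have d: "cmod (g - w) \<le> 2 / real N"
  proof -
    have "cmod (g - w) \<le> \<bar>Re (g - w)\<bar> + \<bar>Im (g - w)\<bar>" by (rule cmod_le)
    also have "\<dots> \<le> 1 / real N + 1 / real N" using ra rb unfolding g_def by simp
    finally show ?thesis by simp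
  qed
  have "cmod g \<le> cmod w + cmod (g - w)" by (metis add.commute diff_add_cancel norm_triangle_ineq)
  also have "\<dots> \<le> cmod w + 2"
  proof -
    have "2 / real N \<le> 2" using N by (simp add: divide_le_eq)
    then show ?thesis using d by linarith
  qed
  finally have "cmod g \<le> real N" using wN by simp
  then have "g \<in> Grid N" unfolding Grid_def
    by (intro CollectI exI[of _ ?a] exI[of _ ?b] conjI) (simp_all only: g_def)
  then show ?thesis using d by blast
qed

lemma pointwise:
  assumes hs: "function_hilbert_space H ip"
    and core: "is_core ip (koop_dom H F) (\<lambda>g. g \<circ> F) (Vspan_all kern xs)"
    and fw: "sigma_inf ip (koop_dom H F) (koop_shift F w) < ereal \<epsilon>"
    and dp: "\<delta> > 0"
  shows "eventually (\<lambda>N. \<exists>g\<in>Gamma_hat ip kern xs F \<epsilon> N. dist w g < \<delta>) sequentially"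
proof -
  obtain h where h: "h \<in> koop_dom H F" "h \<noteq> (\<lambda>y. 0)"
    and hr: "ereal (hnorm ip (koop_shift F w h) / hnorm ip h) < ereal \<epsilon>"
    using fw unfolding sigma_inf_def Inf_less_iff by blast
  define r where "r = hnorm ip (koop_shift F w h) / hnorm ip h"
  have rl: "r < \<epsilon>" using hr r_def by simp
  have hH: "h \<in> H" using h unfolding koop_dom_def by auto
  have hpos: "hnorm ip h > 0" using hnorm_pos[OF hs hH h(2)] .
  obtain s where sS: "\<And>n. s n \<in> Vspan_all kern xs"
    and c1: "(\<lambda>n. hnorm ip (fdiff (s n) h)) \<longlonglongrightarrow> 0"
    and c2: "(\<lambda>n. hnorm ip (fdiff (s n \<circ> F) (h \<circ> F))) \<longlonglongrightarrow> 0"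
    using core h(1) unfolding is_core_def by blast
  have sub: "Vspan_all kern xs \<subseteq> koop_dom H F" using core unfolding is_core_def by blast
  have sD: "\<And>n. s n \<in> koop_dom H F" using sS sub by blast
  have sH: "\<And>n. s n \<in> H" using sD unfolding koop_dom_def by auto
  have L1: "(\<lambda>n. hnorm ip (s n)) \<longlonglongrightarrow> hnorm ip h" by (rule norm_conv[OF hs sH hH c1])
  have L2: "(\<lambda>n. hnorm ip (koop_shift F w (s n))) \<longlonglongrightarrow> hnorm ip (koop_shift F w h)"
    by (rule shift_conv[OF hs sD h(1) c1 c2])
  have L3: "(\<lambda>n. hnorm ip (koop_shift F w (s n)) / hnorm ip (s n)) \<longlonglongrightarrow> r"
    unfolding r_def by (rule tendsto_divide[OF L2 L1]) (use hpos in simp)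
  define r' where "r' = (r + \<epsilon>) / 2"
  have "eventually (\<lambda>n. hnorm ip (koop_shift F w (s n)) / hnorm ip (s n) < r') sequentially"
    by (rule order_tendstoD(2)[OF L3]) (use rl in \<open>simp add: r'_def\<close>)
  moreover have "eventually (\<lambda>n. hnorm ip (s n) > 0) sequentially"
    by (rule order_tendstoD(1)[OF L1 hpos])
  ultimately have "eventually (\<lambda>n. hnorm ip (koop_shift F w (s n)) / hnorm ip (s n) < r' \<and> hnorm ip (s n) > 0) sequentially"
    by (rule eventually_conj)
  then obtain k where k1: "hnorm ip (koop_shift F w (s k)) / hnorm ip (s k) < r'"
    and k2: "hnorm ip (s k) > 0"
    unfolding eventually_sequentially by blast
  have sk0: "s k \<noteq> (\<lambda>y. 0)" using k2 hnorm_zero[OF hs] by auto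
  obtain M where M: "s k \<in> Vspan kern xs M" using sS[of k] unfolding Vspan_all_def by blast
  have gap: "\<epsilon> - r' > 0" using rl by (simp add: r'_def)
  obtain N0 :: nat where N0: "3 / (\<epsilon> - r') + 2 / \<delta> + cmod w + 2 + real M + 1 < real N0"
    using reals_Archimedean2 by blast
  have "\<forall>N\<ge>N0. \<exists>g\<in>Gamma_hat ip kern xs F \<epsilon> N. dist w g < \<delta>"
  proof (intro allI impI)
    fix N assume NN: "N \<ge> N0"
    then have Nr: "real N0 \<le> real N" by simp
    have pos1: "3 / (\<epsilon> - r') \<ge> 0" "2 / \<delta> \<ge> 0" using gap dp by auto
    have nw: "cmod w \<ge> 0" by simp
    have N1r: "1 \<le> real N" "real M \<le> real N" "cmod w + 2 \<le> real N" using N0 Nr pos1 nw by linarith+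
    then have N1: "N \<ge> 1" "M \<le> N" "cmod w + 2 \<le> real N" by simp_all
    have Np: "real N > 0" using N1 by simp
    have b1: "3 / real N \<le> \<epsilon> - r'"
    proof -
      have "3 / (\<epsilon> - r') < real N" using N0 Nr pos1 nw by linarith
      then show ?thesis using gap Np by (simp add: field_simps)
    qed
    have b2: "2 / real N < \<delta>"
    proof -
      have "2 / \<delta> < real N" using N0 Nr pos1 nw by linarith
      then show ?thesis using dp Np by (simp add: field_simps)
    qed
    obtain g where gG: "g \<in> Grid N" and gd: "cmod (g - w) \<le> 2 / real N"
      using grid_approx[OF N1(1) N1(3)] by blast
    have skN: "s k \<in> Vspan kern xs N" using M Vspan_mono[OF N1(2)] by blast
    have "sigma_inf ip (Vspan kern xs N) (koop_shift F g)
        \<le> ereal (hnorm ip (koop_shift F g (s k)) / hnorm ip (s k))"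
      by (rule sigma_le[OF skN sk0])
    also have "hnorm ip (koop_shift F g (s k)) / hnorm ip (s k)
        \<le> (hnorm ip (koop_shift F w (s k)) + cmod (g - w) * hnorm ip (s k)) / hnorm ip (s k)"
      by (rule divide_right_mono[OF shift_est[OF hs sD[of k]]]) (use k2 in simp)
    also have "\<dots> = hnorm ip (koop_shift F w (s k)) / hnorm ip (s k) + cmod (g - w)"
      using k2 by (simp add: field_simps)
    also have "\<dots> \<le> r' + 2 / real N" using k1 gd by simp
    finally have A: "sigma_inf ip (Vspan kern xs N) (koop_shift F g) \<le> ereal (r' + 2 / real N)"
      by simp
    have "sigma_inf ip (Vspan kern xs N) (koop_shift F g) + ereal (1 / real N)
        \<le> ereal (r' + 2 / real N) + ereal (1 / real N)"
      by (rule add_right_mono[OF A])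
    also have "\<dots> = ereal (r' + 3 / real N)" by simp
    also have "\<dots> \<le> ereal \<epsilon>" using b1 by simp
    finally have "g \<in> Gamma_hat ip kern xs F \<epsilon> N" unfolding Gamma_hat_def using gG by simp
    moreover have "dist w g < \<delta>" using gd b2 by (simp add: dist_norm norm_minus_commute)
    ultimately show "\<exists>g\<in>Gamma_hat ip kern xs F \<epsilon> N. dist w g < \<delta>" by blast
  qed
  then show ?thesis unfolding eventually_sequentially by blast
qed



theorem mainTheorem7:
  fixes H :: "('x \<Rightarrow> complex) set"
    and ip :: "('x \<Rightarrow> complex) \<Rightarrow> ('x \<Rightarrow> complex) \<Rightarrow> complex"
    and kern :: "'x \<Rightarrow> 'x \<Rightarrow> complex"
    and F :: "'x \<Rightarrow> 'x"
    and xs :: "nat \<Rightarrow> 'x"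
    and \<epsilon> :: real
  assumes rkhs: "is_RKHS H ip kern"
    and dense: "densely_defined H ip (koop_dom H F)"
    and core_K: "is_core ip (koop_dom H F) (\<lambda>g. g \<circ> F) (Vspan_all kern xs)"
    and core_Kadj: "is_core ip (koop_adj_dom H ip F) (koop_adj H ip F) (Vspan_all kern xs)"
    and eps: "\<epsilon> > 0"
  shows "(\<forall>N\<ge>1. Gamma_hat ip kern xs F \<epsilon> N \<subseteq> Sp_ap_eps H ip F \<epsilon>) \<and>
         attouch_wets (Gamma_hat ip kern xs F \<epsilon>) (Sp_ap_eps H ip F \<epsilon>)"
proof -
  have hs: "function_hilbert_space H ip" using rkhs unfolding is_RKHS_def by blast
  have sub: "Vspan_all kern xs \<subseteq> koop_dom H F" using core_K unfolding is_core_def by blast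
  define U where "U = {z. sigma_inf ip (koop_dom H F) (koop_shift F z) < ereal \<epsilon>}"
  have SU: "Sp_ap_eps H ip F \<epsilon> = closure U" unfolding Sp_ap_eps_def U_def by simp
  have P1: "\<forall>N\<ge>1. Gamma_hat ip kern xs F \<epsilon> N \<subseteq> Sp_ap_eps H ip F \<epsilon>"
  proof (intro allI impI subsetI)
    fix N :: nat and z assume N: "N \<ge> 1" and z: "z \<in> Gamma_hat ip kern xs F \<epsilon> N"
    let ?x = "sigma_inf ip (Vspan kern xs N) (koop_shift F z)"
    have zx: "?x + ereal (1 / real N) \<le> ereal \<epsilon>" using z unfolding Gamma_hat_def by blast
    have Np: "1 / real N > 0" using N by simp
    have "?x < ereal \<epsilon>"
    proof (cases ?x)
      case (real r)
      then have "r + 1 / real N \<le> \<epsilon>" using zx by simp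
      then have "r < \<epsilon>" using Np by linarith
      then show ?thesis using real by simp
    next
      case PInf
      then show ?thesis using zx by simp
    next
      case MInf
      then show ?thesis by simp
    qed
    moreover have "sigma_inf ip (koop_dom H F) (koop_shift F z) \<le> ?x"
      by (rule sigma_mono) (use sub Vspan_sub_all in blast)
    ultimately have "z \<in> U" unfolding U_def by simp
    then show "z \<in> Sp_ap_eps H ip F \<epsilon>" unfolding SU using closure_subset by blast
  qed
  have ev1: "eventually (\<lambda>N. Gamma_hat ip kern xs F \<epsilon> N \<subseteq> Sp_ap_eps H ip F \<epsilon>) sequentially"
    using P1 unfolding eventually_sequentially by blast
  have P2: "attouch_wets (Gamma_hat ip kern xs F \<epsilon>) (Sp_ap_eps H ip F \<epsilon>)"
  proof (cases "Sp_ap_eps H ip F \<epsilon> = {}")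
    case True
    have "\<forall>m::nat. eventually (\<lambda>n. Gamma_hat ip kern xs F \<epsilon> n \<inter> ball 0 (real m) = {}) sequentially"
      using ev1 True by (auto elim: eventually_mono)
    then show ?thesis unfolding attouch_wets_def using True by simp
  next
    case False
    have "\<forall>\<delta>>0. \<forall>K. compact K \<longrightarrow>
              eventually (\<lambda>n. Gamma_hat ip kern xs F \<epsilon> n \<inter> K \<subseteq> (\<Union>c\<in>Sp_ap_eps H ip F \<epsilon>. ball c \<delta>) \<and>
                   Sp_ap_eps H ip F \<epsilon> \<inter> K \<subseteq> (\<Union>c\<in>Gamma_hat ip kern xs F \<epsilon> n. ball c \<delta>)) sequentially"
    proof (intro allI impI)
      fix \<delta> :: real and K :: "complex set" assume dp: "\<delta> > 0" and K: "compact K"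
      let ?S = "Sp_ap_eps H ip F \<epsilon>"
      have evA: "eventually (\<lambda>n. Gamma_hat ip kern xs F \<epsilon> n \<inter> K \<subseteq> (\<Union>c\<in>?S. ball c \<delta>)) sequentially"
        using ev1 by (rule eventually_mono) (use dp in force)
      have cSK: "compact (?S \<inter> K)" unfolding SU by (rule closed_Int_compact[OF closed_closure K])
      have cov: "?S \<inter> K \<subseteq> \<Union>((\<lambda>w. ball w (\<delta>/2)) ` U)"
      proof
        fix z assume "z \<in> ?S \<inter> K"
        then have "z \<in> closure U" unfolding SU by blast
        then obtain w where "w \<in> U" "dist w z < \<delta>/2" using dp unfolding closure_approachable
          by (metis half_gt_zero)
        then show "z \<in> \<Union>((\<lambda>w. ball w (\<delta>/2)) ` U)" by auto
      qed
      obtain W where WU: "W \<subseteq> U" and Wf: "finite W" and Wc: "?S \<inter> K \<subseteq> \<Union>((\<lambda>w. ball w (\<delta>/2)) ` W)"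
        using compactE_image[OF cSK _ cov] by blast
      have "eventually (\<lambda>n. \<forall>w\<in>W. \<exists>g\<in>Gamma_hat ip kern xs F \<epsilon> n. dist w g < \<delta>/2) sequentially"
      proof (rule eventually_ball_finite[OF Wf], intro ballI)
        fix w assume "w \<in> W"
        then have "sigma_inf ip (koop_dom H F) (koop_shift F w) < ereal \<epsilon>" using WU unfolding U_def by blast
        then show "eventually (\<lambda>n. \<exists>g\<in>Gamma_hat ip kern xs F \<epsilon> n. dist w g < \<delta>/2) sequentially"
          by (rule pointwise[OF hs core_K]) (use dp in simp)
      qed
      then have evB: "eventually (\<lambda>n. ?S \<inter> K \<subseteq> (\<Union>c\<in>Gamma_hat ip kern xs F \<epsilon> n. ball c \<delta>)) sequentially"
      proof (rule eventually_mono)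
        fix n assume A: "\<forall>w\<in>W. \<exists>g\<in>Gamma_hat ip kern xs F \<epsilon> n. dist w g < \<delta>/2"
        show "?S \<inter> K \<subseteq> (\<Union>c\<in>Gamma_hat ip kern xs F \<epsilon> n. ball c \<delta>)"
        proof
          fix z assume "z \<in> ?S \<inter> K"
          then obtain w where w: "w \<in> W" "dist w z < \<delta>/2" using Wc by auto
          then obtain g where g: "g \<in> Gamma_hat ip kern xs F \<epsilon> n" "dist w g < \<delta>/2" using A by blast
          have "dist g z \<le> dist g w + dist w z" by (rule dist_triangle)
          then have "dist g z < \<delta>" using w g by (simp add: dist_commute)
          then show "z \<in> (\<Union>c\<in>Gamma_hat ip kern xs F \<epsilon> n. ball c \<delta>)" using g by auto
        qed
      qed
      show "eventually (\<lambda>n. Gamma_hat ip kern xs F \<epsilon> n \<inter> K \<subseteq> (\<Union>c\<in>?S. ball c \<delta>) \<and>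
                   ?S \<inter> K \<subseteq> (\<Union>c\<in>Gamma_hat ip kern xs F \<epsilon> n. ball c \<delta>)) sequentially"
        by (rule eventually_conj[OF evA evB])
    qed
    then show ?thesis unfolding attouch_wets_def using False by simp
  qed
  show ?thesis using P1 P2 by blast
qed

end
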